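(* Let $(A,\rhd,\lhd,\succ,\prec)$ be a pre-dual pre-Poisson algebra. (a) With $x\circ y=x\rhd y+x\lhd y$ and $[x,y]=x\succ y+x\prec y$, $(A,\circ,[\cdot,\cdot])$ is a dual pre-Poisson algebra, and $(A;L_\rhd,R_\lhd,L_\succ,R_\prec)$ is a representation of $(A,\circ,[\cdot,\cdot])$. (b) Suppose moreover that $x\lhd y=y\rhd x$ and $x\prec y=-y\succ x$ for all $x,y\in A$. Then with $x\diamond y=x\succ y$ and $x\odot y=x\rhd y$, $(A,\diamond,\odot)$ is a pre-Poisson algebra, and $(A,\bullet,\{\cdot,\cdot\})$ with $x\bullet y=x\odot y+y\odot x$, $\{x,y\}=x\diamond y-y\diamond x$ is a Poisson algebra.
   Context: Field $\mathbb{F}$ of characteristic $0$. $L_\diamond(x)y=x\diamond y$, $R_\diamond(x)y=y\diamond x$. A pre-dual pre-Poisson algebra: bilinear $\rhd,\lhd,\succ,\prec$ with, for all $x,y,z$: $x\lhd(y\lhd z+y\rhd z)=(x\lhd y)\lhd z=(y\rhd x)\lhd z=y\rhd(x\lhd z)$; $x\rhd(y\rhd z)=(x\lhd y+x\rhd y)\rhd z=(y\lhd x+y\rhd x)\rhd z$; $(x\prec y+x\succ y)\succ z=x\succ(y\succ z)-y\succ(x\succ z)$; $(x\succ y)\prec z=-(y\prec x)\prec z$; $x\prec(y\prec z+y\succ z)=(x\prec y)\prec z+y\succ(x\prec z)$; $x\prec(y\rhd z+y\lhd z)=(x\prec y)\lhd z+y\rhd(x\prec z)$; $x\succ(y\lhd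 z)=(x\succ y)\lhd z+y\lhd(x\succ z+x\prec z)$; $x\succ(y\rhd z)=(x\succ y+x\prec y)\rhd z+y\rhd(x\succ z)$; $(x\lhd y)\prec z=x\lhd(y\succ z+y\prec z)+y\rhd(x\prec z)$; $(x\rhd y+x\lhd y)\succ z=x\rhd(y\succ z)+y\rhd(x\succ z)$; $(x\rhd y-y\lhd x)\prec z=0$; $(x\succ y+y\prec x)\lhd z=0$; $(x\succ y+x\prec y+y\succ x+y\prec x)\rhd z=0$. A dual pre-Poisson algebra: $x\circ(y\circ z)=(x\circ y)\circ z=(y\circ x)\circ z$; $[x,[y,z]]=[[x,y],z]+[y,[x,z]]$; $[x,y\circ z]=[x,y]\circ z+y\circ[x,z]$; $[x\circ y,z]=x\circ[y,z]+y\circ[x,z]$; $[x,y]\circ z=-[y,x]\circ z$. A representation $(V;l_\circ,r_\circ,l_{[\cdot,\cdot]},r_{[\cdot,\cdot]})$ of it: linear maps $A\to\mathrm{End}(V)$ with $r_\circ(x)r_\circ(y)=r_\circ(y\circ x)=l_\circ(y)r_\circ(x)=r_\circ(x)l_\circ(y)$; $l_\circ(x\circ y)=l_\circ(x)l_\circ(y)=l_\circ(y)l_\circ(x)$; $l_{[\cdot,\cdot]}([x,y])=l_{[\cdot,\cdot]}(x)l_{[\cdot,\cdot]}(y)-l_{[\cdot,\cdot]}(y)l_{[\cdot,\cdot]}(x)$; $r_{[\cdot,\cdot]}([x,y])=r_{[\cdot,\cdot]}(y)r_{[\cdot,\cdot]}(x)+l_{[\cdot,\cdot]}(x)r_{[\cdot,\cdot]}(y)$;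 $r_{[\cdot,\cdot]}(x)r_{[\cdot,\cdot]}(y)=-r_{[\cdot,\cdot]}(x)l_{[\cdot,\cdot]}(y)$; $r_{[\cdot,\cdot]}(x\circ y)=r_\circ(y)r_{[\cdot,\cdot]}(x)+l_\circ(x)r_{[\cdot,\cdot]}(y)$; $l_{[\cdot,\cdot]}(x)r_\circ(y)=r_\circ(y)l_{[\cdot,\cdot]}(x)+r_\circ([x,y])$; $l_{[\cdot,\cdot]}(x)l_\circ(y)=l_\circ([x,y])+l_\circ(y)l_{[\cdot,\cdot]}(x)$; $r_{[\cdot,\cdot]}(x)r_\circ(y)=r_\circ([y,x])+l_\circ(y)r_{[\cdot,\cdot]}(x)$; $l_{[\cdot,\cdot]}(x\circ y)=l_\circ(x)l_{[\cdot,\cdot]}(y)+l_\circ(y)l_{[\cdot,\cdot]}(x)$; $r_{[\cdot,\cdot]}(x)(l_\circ-r_\circ)(y)=0$; $r_\circ(x)(l_{[\cdot,\cdot]}+r_{[\cdot,\cdot]})(y)=0$; $l_\circ([x,y]+[y,x])=0$. A pre-Poisson algebra $(A,\diamond,\odot)$: $x\diamond(y\diamond z)-(x\diamond y)\diamond z=y\diamond(x\diamond z)-(y\diamond x)\diamond z$; $x\odot(y\odot z)=(x\odot y+y\odot x)\odot z$; $(x\diamond y-y\diamond x)\odot z=x\diamond(y\odot z)-y\odot(x\diamond z)$; $(x\odot y+y\odot x)\diamond z=x\odot(y\diamond z)+y\odot(x\diamond z)$. A Poisson algebra: commutative associative $\bullet$, Lie bracket $\{\cdot,\cdot\}$, $\{x,y\bullet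 z\}=\{x,y\}\bullet z+y\bullet\{x,z\}$. *)

theory Defs
  imports Complex_Main
begin

definition bilinear_op :: "('k::field \<Rightarrow> 'a::ab_group_add \<Rightarrow> 'a) \<Rightarrow> ('a \<Rightarrow> 'a \<Rightarrow> 'a) \<Rightarrow> bool" where
  "bilinear_op s m \<longleftrightarrow> (\<forall>x. Vector_Spaces.linear s s (m x)) \<and> (\<forall>y. Vector_Spaces.linear s s (\<lambda>x. m x y))"

definition pre_dual_pre_Poisson ::
  "('k::field \<Rightarrow> 'a::ab_group_add \<Rightarrow> 'a) \<Rightarrow> ('a \<Rightarrow> 'a \<Rightarrow> 'a) \<Rightarrow> ('a \<Rightarrow> 'a \<Rightarrow> 'a)
     \<Rightarrow> ('a \<Rightarrow> 'a \<Rightarrow> 'a) \<Rightarrow> ('a \<Rightarrow> 'a \<Rightarrow> 'a) \<Rightarrow> bool" where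
  "pre_dual_pre_Poisson s rh lh su pr \<longleftrightarrow>
     bilinear_op s rh \<and> bilinear_op s lh \<and> bilinear_op s su \<and> bilinear_op s pr \<and>
     (\<forall>x y z.
        lh x (lh y z + rh y z) = lh (lh x y) z \<and>
        lh (lh x y) z = lh (rh y x) z \<and>
        lh (rh y x) z = rh y (lh x z) \<and>
        rh x (rh y z) = rh (lh x y + rh x y) z \<and>
        rh (lh x y + rh x y) z = rh (lh y x + rh y x) z \<and>
        su (pr x y + su x y) z = su x (su y z) - su y (su x z) \<and>
        pr (su x y) z = - pr (pr y x) z \<and>
        pr x (pr y z + su y z) = pr (pr x y) z + su y (pr x z) \<and>
        pr x (rh y z + lh y z) = lh (pr x y) z + rh y (pr x z) \<and>
        su x (lh y z) = lh (su x y) z + lh y (su x z + pr x z) \<and>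
        su x (rh y z) = rh (su x y + pr x y) z + rh y (su x z) \<and>
        pr (lh x y) z = lh x (su y z + pr y z) + rh y (pr x z) \<and>
        su (rh x y + lh x y) z = rh x (su y z) + rh y (su x z) \<and>
        pr (rh x y - lh y x) z = 0 \<and>
        lh (su x y + pr y x) z = 0 \<and>
        rh (su x y + pr x y + su y x + pr y x) z = 0)"

definition dual_pre_Poisson ::
  "('k::field \<Rightarrow> 'a::ab_group_add \<Rightarrow> 'a) \<Rightarrow> ('a \<Rightarrow> 'a \<Rightarrow> 'a) \<Rightarrow> ('a \<Rightarrow> 'a \<Rightarrow> 'a) \<Rightarrow> bool" where
  "dual_pre_Poisson s c b \<longleftrightarrow>
     bilinear_op s c \<and> bilinear_op s b \<and>
     (\<forall>x y z.
        c x (c y z) = c (c x y) z \<and>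
        c (c x y) z = c (c y x) z \<and>
        b x (b y z) = b (b x y) z + b y (b x z) \<and>
        b x (c y z) = c (b x y) z + c y (b x z) \<and>
        b (c x y) z = c x (b y z) + c y (b x z) \<and>
        c (b x y) z = - c (b y x) z)"

definition lin_to_End ::
  "('k::field \<Rightarrow> 'a::ab_group_add \<Rightarrow> 'a) \<Rightarrow> ('k \<Rightarrow> 'v::ab_group_add \<Rightarrow> 'v) \<Rightarrow> ('a \<Rightarrow> 'v \<Rightarrow> 'v) \<Rightarrow> bool" where
  "lin_to_End sA sV l \<longleftrightarrow> (\<forall>x. Vector_Spaces.linear sV sV (l x)) \<and>
     (\<forall>a x y v. l (sA a x + y) v = sV a (l x v) + l y v)"

definition dual_pre_Poisson_rep ::
  "('k::field \<Rightarrow> 'a::ab_group_add \<Rightarrow> 'a) \<Rightarrow> ('a \<Rightarrow> 'a \<Rightarrow> 'a) \<Rightarrow> ('a \<Rightarrow> 'a \<Rightarrow> 'a) \<Rightarrow>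
   ('k \<Rightarrow> 'v::ab_group_add \<Rightarrow> 'v) \<Rightarrow> ('a \<Rightarrow> 'v \<Rightarrow> 'v) \<Rightarrow> ('a \<Rightarrow> 'v \<Rightarrow> 'v) \<Rightarrow>
   ('a \<Rightarrow> 'v \<Rightarrow> 'v) \<Rightarrow> ('a \<Rightarrow> 'v \<Rightarrow> 'v) \<Rightarrow> bool" where
  "dual_pre_Poisson_rep sA c b sV lc rc lb rb \<longleftrightarrow>
     vector_space sV \<and>
     lin_to_End sA sV lc \<and> lin_to_End sA sV rc \<and> lin_to_End sA sV lb \<and> lin_to_End sA sV rb \<and>
     (\<forall>x y.
        rc x \<circ> rc y = rc (c y x) \<and>
        rc (c y x) = lc y \<circ> rc x \<and>
        lc y \<circ> rc x = rc x \<circ> lc y \<and>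
        lc (c x y) = lc x \<circ> lc y \<and>
        lc x \<circ> lc y = lc y \<circ> lc x \<and>
        lb (b x y) = (\<lambda>v. (lb x \<circ> lb y) v - (lb y \<circ> lb x) v) \<and>
        rb (b x y) = (\<lambda>v. (rb y \<circ> rb x) v + (lb x \<circ> rb y) v) \<and>
        rb x \<circ> rb y = (\<lambda>v. - (rb x \<circ> lb y) v) \<and>
        rb (c x y) = (\<lambda>v. (rc y \<circ> rb x) v + (lc x \<circ> rb y) v) \<and>
        lb x \<circ> rc y = (\<lambda>v. (rc y \<circ> lb x) v + rc (b x y) v) \<and>
        lb x \<circ> lc y = (\<lambda>v. lc (b x y) v + (lc y \<circ> lb x) v) \<and>
        rb x \<circ> rc y = (\<lambda>v. rc (b y x) v + (lc y \<circ> rb x) v) \<and>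
        lb (c x y) = (\<lambda>v. (lc x \<circ> lb y) v + (lc y \<circ> lb x) v) \<and>
        rb x \<circ> (\<lambda>v. lc y v - rc y v) = (\<lambda>v. 0) \<and>
        rc x \<circ> (\<lambda>v. lb y v + rb y v) = (\<lambda>v. 0) \<and>
        lc (b x y + b y x) = (\<lambda>v. 0))"

definition pre_Poisson ::
  "('k::field \<Rightarrow> 'a::ab_group_add \<Rightarrow> 'a) \<Rightarrow> ('a \<Rightarrow> 'a \<Rightarrow> 'a) \<Rightarrow> ('a \<Rightarrow> 'a \<Rightarrow> 'a) \<Rightarrow> bool" where
  "pre_Poisson s d od \<longleftrightarrow>
     bilinear_op s d \<and> bilinear_op s od \<and>
     (\<forall>x y z.
        d x (d y z) - d (d x y) z = d y (d x z) - d (d y x) z \<and>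
        od x (od y z) = od (od x y + od y x) z \<and>
        od (d x y - d y x) z = d x (od y z) - od y (d x z) \<and>
        d (od x y + od y x) z = od x (d y z) + od y (d x z))"

definition Poisson ::
  "('k::field \<Rightarrow> 'a::ab_group_add \<Rightarrow> 'a) \<Rightarrow> ('a \<Rightarrow> 'a \<Rightarrow> 'a) \<Rightarrow> ('a \<Rightarrow> 'a \<Rightarrow> 'a) \<Rightarrow> bool" where
  "Poisson s m br \<longleftrightarrow>
     bilinear_op s m \<and> bilinear_op s br \<and>
     (\<forall>x y z.
        m x y = m y x \<and>
        m (m x y) z = m x (m y z) \<and>
        br x x = 0 \<and>
        br x (br y z) + br y (br z x) + br z (br x y) = 0 \<and>
        br x (m y z) = m (br x y) z + m y (br x z))"

end

theory Submission
  imports Defs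
begin

lemma comb1: fixes L :: "'a::ab_group_add" assumes "A1 = B1" "L - R = (A1 - B1)" shows "L = R"
proof -
  have "L - R = 0" using assms(2) unfolding assms(1-1) by simp
  then show ?thesis by simp
qed

lemma comb2: fixes L :: "'a::ab_group_add" assumes "A1 = B1" "A2 = B2" "L - R = (A1 - B1) + (A2 - B2)" shows "L = R"
proof -
  have "L - R = 0" using assms(3) unfolding assms(1-2) by simp
  then show ?thesis by simp
qed

lemma comb3: fixes L :: "'a::ab_group_add" assumes "A1 = B1" "A2 = B2" "A3 = B3" "L - R = (A1 - B1) + (A2 - B2) + (A3 - B3)" shows "L = R"
proof -
  have "L - R = 0" using assms(4) unfolding assms(1-3) by simp
  then show ?thesis by simp
qed

lemma comb4: fixes L :: "'a::ab_group_add" assumes "A1 = B1" "A2 = B2" "A3 = B3" "A4 = B4" "L - R = (A1 - B1) + (A2 - B2) + (A3 - B3) + (A4 - B4)" shows "L = R"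
proof -
  have "L - R = 0" using assms(5) unfolding assms(1-4) by simp
  then show ?thesis by simp
qed


lemma lin_add: assumes vs: "vector_space s" and "Vector_Spaces.linear s s f" "Vector_Spaces.linear s s g" shows "Vector_Spaces.linear s s (\<lambda>x. f x + g x)"
proof -
  interpret f: Vector_Spaces.linear s s f by fact
  interpret g: Vector_Spaces.linear s s g by fact
  have d: "s c (a + b) = s c a + s c b" for c a b using vector_space.vector_space_assms(1)[OF vs] .
  show ?thesis by unfold_locales (simp_all add: f.add g.add f.scale g.scale d vs)
qed
lemma lin_sub: assumes vs: "vector_space s" and "Vector_Spaces.linear s s f" "Vector_Spaces.linear s s g" shows "Vector_Spaces.linear s s (\<lambda>x. f x - g x)"
proof -
  interpret f: Vector_Spaces.linear s s f by fact
  interpret g: Vector_Spaces.linear s s g by fact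
  have dd: "s c (a - b) = s c a - s c b" for c a b using module.scale_right_diff_distrib[of s] vs by (simp add: module_iff_vector_space)
  show ?thesis by unfold_locales (simp_all add: f.add g.add f.scale g.scale dd vs)
qed

lemma bil_rules:
  assumes "bilinear_op s f"
  shows "f (a + b) c = f a c + f b c" "f a (b + c) = f a b + f a c"
    "f (- a) c = - f a c" "f a (- b) = - f a b"
    "f (a - b) c = f a c - f b c" "f a (b - c) = f a b - f a c"
    "f 0 c = 0" "f a 0 = 0"
    "f (s k a) c = s k (f a c)" "f a (s k b) = s k (f a b)"
proof -
  have l1: "Vector_Spaces.linear s s (f a)" for a using assms by (simp add: bilinear_op_def)
  have l2: "Vector_Spaces.linear s s (\<lambda>x. f x c)" for c using assms by (simp add: bilinear_op_def)
  have m1: "module_hom s s (f a)" for a using l1 by (simp add: module_hom_iff_linear)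
  have m2: "module_hom s s (\<lambda>x. f x c)" for c using l2 by (simp add: module_hom_iff_linear)
  show "f (a + b) c = f a c + f b c" using module_hom.add[OF m2[of c]] by simp
  show "f a (b + c) = f a b + f a c" using module_hom.add[OF m1[of a]] by simp
  show "f (- a) c = - f a c" using module_hom.neg[OF m2[of c]] by simp
  show "f a (- b) = - f a b" using module_hom.neg[OF m1[of a]] by simp
  show "f (a - b) c = f a c - f b c" using module_hom.diff[OF m2[of c]] by simp
  show "f a (b - c) = f a b - f a c" using module_hom.diff[OF m1[of a]] by simp
  show "f 0 c = 0" using module_hom.zero[OF m2[of c]] by simp
  show "f a 0 = 0" using module_hom.zero[OF m1[of a]] by simp
  show "f (s k a) c = s k (f a c)" using module_hom.scale[OF m2[of c]] by simp
  show "f a (s k b) = s k (f a b)" using module_hom.scale[OF m1[of a]] by simp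
qed

lemma bil_add:
  assumes vs: "vector_space s" and "bilinear_op s f" "bilinear_op s g"
  shows "bilinear_op s (\<lambda>x y. f x y + g x y)"
  using assms(2,3) unfolding bilinear_op_def by (simp add: lin_add[OF vs])

lemma bil_flip:
  assumes "bilinear_op s f"
  shows "bilinear_op s (\<lambda>x y. f y x)"
  using assms unfolding bilinear_op_def by simp

lemma bil_sub:
  assumes vs: "vector_space s" and "bilinear_op s f" "bilinear_op s g"
  shows "bilinear_op s (\<lambda>x y. f x y - g x y)"
  using assms(2,3) unfolding bilinear_op_def by (simp add: lin_sub[OF vs])

context
  fixes s :: "'k::field_char_0 \<Rightarrow> 'a::ab_group_add \<Rightarrow> 'a"
    and rh lh su pr :: "'a \<Rightarrow> 'a \<Rightarrow> 'a"
  assumes VS: "vector_space s"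
    and PD: "pre_dual_pre_Poisson s rh lh su pr"
begin

lemma B: "bilinear_op s rh" "bilinear_op s lh" "bilinear_op s su" "bilinear_op s pr"
  using PD by (simp_all add: pre_dual_pre_Poisson_def)

lemmas BL = bil_rules[OF B(1)] bil_rules[OF B(2)] bil_rules[OF B(3)] bil_rules[OF B(4)]

lemma AX: "\<forall>x y z.
        lh x (lh y z + rh y z) = lh (lh x y) z \<and>
        lh (lh x y) z = lh (rh y x) z \<and>
        lh (rh y x) z = rh y (lh x z) \<and>
        rh x (rh y z) = rh (lh x y + rh x y) z \<and>
        rh (lh x y + rh x y) z = rh (lh y x + rh y x) z \<and>
        su (pr x y + su x y) z = su x (su y z) - su y (su x z) \<and>
        pr (su x y) z = - pr (pr y x) z \<and>
        pr x (pr y z + su y z) = pr (pr x y) z + su y (pr x z) \<and>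
        pr x (rh y z + lh y z) = lh (pr x y) z + rh y (pr x z) \<and>
        su x (lh y z) = lh (su x y) z + lh y (su x z + pr x z) \<and>
        su x (rh y z) = rh (su x y + pr x y) z + rh y (su x z) \<and>
        pr (lh x y) z = lh x (su y z + pr y z) + rh y (pr x z) \<and>
        su (rh x y + lh x y) z = rh x (su y z) + rh y (su x z) \<and>
        pr (rh x y - lh y x) z = 0 \<and>
        lh (su x y + pr y x) z = 0 \<and>
        rh (su x y + pr x y + su y x + pr y x) z = 0"
  using PD by (simp add: pre_dual_pre_Poisson_def)

lemma a1: "lh x (lh y z + rh y z) = lh (lh x y) z" using spec[OF spec[OF spec[OF AX, of x], of y], of z] by blast
lemma a2: "lh (lh x y) z = lh (rh y x) z" using spec[OF spec[OF spec[OF AX, of x], of y], of z] by blast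
lemma a3: "lh (rh y x) z = rh y (lh x z)" using spec[OF spec[OF spec[OF AX, of x], of y], of z] by blast
lemma a4: "rh x (rh y z) = rh (lh x y + rh x y) z" using spec[OF spec[OF spec[OF AX, of x], of y], of z] by blast
lemma a5: "rh (lh x y + rh x y) z = rh (lh y x + rh y x) z" using spec[OF spec[OF spec[OF AX, of x], of y], of z] by blast
lemma a6: "su (pr x y + su x y) z = su x (su y z) - su y (su x z)" using spec[OF spec[OF spec[OF AX, of x], of y], of z] by blast
lemma a7: "pr (su x y) z = - pr (pr y x) z" using spec[OF spec[OF spec[OF AX, of x], of y], of z] by blast
lemma a8: "pr x (pr y z + su y z) = pr (pr x y) z + su y (pr x z)" using spec[OF spec[OF spec[OF AX, of x], of y], of z] by blast
lemma a9: "pr x (rh y z + lh y z) = lh (pr x y) z + rh y (pr x z)" using spec[OF spec[OF spec[OF AX, of x], of y], of z] by blast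
lemma a10: "su x (lh y z) = lh (su x y) z + lh y (su x z + pr x z)" using spec[OF spec[OF spec[OF AX, of x], of y], of z] by blast
lemma a11: "su x (rh y z) = rh (su x y + pr x y) z + rh y (su x z)" using spec[OF spec[OF spec[OF AX, of x], of y], of z] by blast
lemma a12: "pr (lh x y) z = lh x (su y z + pr y z) + rh y (pr x z)" using spec[OF spec[OF spec[OF AX, of x], of y], of z] by blast
lemma a13: "su (rh x y + lh x y) z = rh x (su y z) + rh y (su x z)" using spec[OF spec[OF spec[OF AX, of x], of y], of z] by blast
lemma a14: "pr (rh x y - lh y x) z = 0" using spec[OF spec[OF spec[OF AX, of x], of y], of z] by blast
lemma a15: "lh (su x y + pr y x) z = 0" using spec[OF spec[OF spec[OF AX, of x], of y], of z] by blast
lemma a16: "rh (su x y + pr x y + su y x + pr y x) z = 0" using spec[OF spec[OF spec[OF AX, of x], of y], of z] by blast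

lemma partA1: "dual_pre_Poisson s (\<lambda>x y. rh x y + lh x y) (\<lambda>x y. su x y + pr x y)"
  unfolding dual_pre_Poisson_def
  apply (intro conjI allI)
  subgoal by (intro bil_add[OF VS] B)
  subgoal by (intro bil_add[OF VS] B)
  subgoal for x y z by (rule comb3[OF a1[where x=x and y=y and z=z] a4[where x=x and y=y and z=z] a3[where x=y and y=x and z=z, symmetric]]) (simp add: BL algebra_simps)
  subgoal for x y z by (rule comb3[OF a2[where x=x and y=y and z=z] a5[where x=x and y=y and z=z] a2[where x=y and y=x and z=z, symmetric]]) (simp add: BL algebra_simps)
  subgoal for x y z by (rule comb4[OF a6[where x=x and y=y and z=z, symmetric] a7[where x=x and y=y and z=z, symmetric] a8[where x=x and y=y and z=z] a8[where x=y and y=x and z=z, symmetric]]) (simp add: BL algebra_simps)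
  subgoal for x y z by (rule comb3[OF a9[where x=x and y=y and z=z] a10[where x=x and y=y and z=z] a11[where x=x and y=y and z=z]]) (simp add: BL algebra_simps)
  subgoal for x y z by (rule comb4[OF a12[where x=x and y=y and z=z] a13[where x=x and y=y and z=z] a14[where x=x and y=y and z=z] a12[where x=y and y=x and z=z]]) (simp add: BL algebra_simps)
  subgoal for x y z by (rule comb3[OF a15[where x=x and y=y and z=z] a16[where x=x and y=y and z=z] a15[where x=y and y=x and z=z]]) (simp add: BL algebra_simps)
  done

lemma partA2: "dual_pre_Poisson_rep s (\<lambda>x y. rh x y + lh x y) (\<lambda>x y. su x y + pr x y)
           s (\<lambda>x y. rh x y) (\<lambda>x y. lh y x) (\<lambda>x y. su x y) (\<lambda>x y. pr y x)"
  unfolding dual_pre_Poisson_rep_def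
  apply (intro conjI allI)
  subgoal by (rule VS)
  subgoal using B(1) unfolding lin_to_End_def bilinear_op_def by (simp add: BL)
  subgoal using B(2) unfolding lin_to_End_def bilinear_op_def by (simp add: BL)
  subgoal using B(3) unfolding lin_to_End_def bilinear_op_def by (simp add: BL)
  subgoal using B(4) unfolding lin_to_End_def bilinear_op_def by (simp add: BL)
  subgoal for x y apply (simp only: fun_eq_iff comp_def) apply (rule allI) subgoal for v by (rule comb1[OF a1[where x=v and y=y and z=x, symmetric]]) (simp add: BL algebra_simps) done
  subgoal for x y apply (simp only: fun_eq_iff comp_def) apply (rule allI) subgoal for v by (rule comb3[OF a1[where x=v and y=y and z=x] a2[where x=v and y=y and z=x] a3[where x=v and y=y and z=x]]) (simp add: BL algebra_simps) done
  subgoal for x y apply (simp only: fun_eq_iff comp_def) apply (rule allI) subgoal for v by (rule comb1[OF a3[where x=v and y=y and z=x, symmetric]]) (simp add: BL algebra_simps) done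
  subgoal for x y apply (simp only: fun_eq_iff comp_def) apply (rule allI) subgoal for v by (rule comb1[OF a4[where x=x and y=y and z=v, symmetric]]) (simp add: BL algebra_simps) done
  subgoal for x y apply (simp only: fun_eq_iff comp_def) apply (rule allI) subgoal for v by (rule comb3[OF a4[where x=x and y=y and z=v] a5[where x=x and y=y and z=v] a4[where x=y and y=x and z=v, symmetric]]) (simp add: BL algebra_simps) done
  subgoal for x y apply (simp only: fun_eq_iff comp_def) apply (rule allI) subgoal for v by (rule comb1[OF a6[where x=x and y=y and z=v]]) (simp add: BL algebra_simps) done
  subgoal for x y apply (simp only: fun_eq_iff comp_def) apply (rule allI) subgoal for v by (rule comb1[OF a8[where x=v and y=x and z=y]]) (simp add: BL algebra_simps) done
  subgoal for x y apply (simp only: fun_eq_iff comp_def) apply (rule allI) subgoal for v by (rule comb1[OF a7[where x=y and y=v and z=x]]) (simp add: BL algebra_simps) done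
  subgoal for x y apply (simp only: fun_eq_iff comp_def) apply (rule allI) subgoal for v by (rule comb1[OF a9[where x=v and y=x and z=y]]) (simp add: BL algebra_simps) done
  subgoal for x y apply (simp only: fun_eq_iff comp_def) apply (rule allI) subgoal for v by (rule comb1[OF a10[where x=x and y=v and z=y]]) (simp add: BL algebra_simps) done
  subgoal for x y apply (simp only: fun_eq_iff comp_def) apply (rule allI) subgoal for v by (rule comb1[OF a11[where x=x and y=y and z=v]]) (simp add: BL algebra_simps) done
  subgoal for x y apply (simp only: fun_eq_iff comp_def) apply (rule allI) subgoal for v by (rule comb1[OF a12[where x=v and y=y and z=x]]) (simp add: BL algebra_simps) done
  subgoal for x y apply (simp only: fun_eq_iff comp_def) apply (rule allI) subgoal for v by (rule comb1[OF a13[where x=x and y=y and z=v]]) (simp add: BL algebra_simps) done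
  subgoal for x y apply (simp only: fun_eq_iff comp_def) apply (rule allI) subgoal for v by (rule comb1[OF a14[where x=y and y=v and z=x]]) (simp add: BL algebra_simps) done
  subgoal for x y apply (simp only: fun_eq_iff comp_def) apply (rule allI) subgoal for v by (rule comb1[OF a15[where x=y and y=v and z=x]]) (simp add: BL algebra_simps) done
  subgoal for x y apply (simp only: fun_eq_iff comp_def) apply (rule allI) subgoal for v by (rule comb1[OF a16[where x=x and y=y and z=v]]) (simp add: BL algebra_simps) done
  done

lemma partB:
  assumes H: "\<forall>x y. lh x y = rh y x \<and> pr x y = - su y x"
  shows "pre_Poisson s su rh \<and> Poisson s (\<lambda>x y. rh x y + rh y x) (\<lambda>x y. su x y - su y x)"
proof -
  have lhE: "lh a b = rh b a" for a b using H by blast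
  have prE: "pr a b = - su b a" for a b using H by blast
  have P1: "pre_Poisson s su rh"
    unfolding pre_Poisson_def
    apply (intro conjI allI)
    subgoal by (rule B)
    subgoal by (rule B)
    subgoal for x y z by (rule comb1[OF a6[where x=x and y=y and z=z, symmetric]]) (simp add: BL lhE prE algebra_simps)
    subgoal for x y z by (rule comb1[OF a4[where x=x and y=y and z=z]]) (simp add: BL lhE prE algebra_simps)
    subgoal for x y z by (rule comb1[OF a11[where x=x and y=y and z=z, symmetric]]) (simp add: BL lhE prE algebra_simps)
    subgoal for x y z by (rule comb1[OF a13[where x=x and y=y and z=z]]) (simp add: BL lhE prE algebra_simps)
    done
  have P2: "Poisson s (\<lambda>x y. rh x y + rh y x) (\<lambda>x y. su x y - su y x)"
    unfolding Poisson_def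
    apply (intro conjI allI)
    subgoal by (rule bil_add[OF VS B(1) bil_flip[OF B(1)]])
    subgoal by (rule bil_sub[OF VS B(3) bil_flip[OF B(3)]])
    subgoal by (simp add: add.commute)
    subgoal for x y z by (rule comb4[OF a1[where x=x and y=y and z=z, symmetric] a4[where x=x and y=y and z=z, symmetric] a4[where x=x and y=z and z=y, symmetric] a1[where x=y and y=x and z=z, symmetric]]) (simp add: BL lhE prE algebra_simps)
    subgoal by simp
    subgoal for x y z by (rule comb3[OF a6[where x=x and y=y and z=z, symmetric] a8[where x=x and y=y and z=z] a6[where x=x and y=z and z=y]]) (simp add: BL lhE prE algebra_simps)
    subgoal for x y z by (rule comb3[OF a9[where x=x and y=y and z=z] a10[where x=x and y=y and z=z] a11[where x=x and y=y and z=z]]) (simp add: BL lhE prE algebra_simps)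
    done
  show ?thesis using P1 P2 by blast
qed

end


theorem proposition3p26:
  fixes s :: "'k::field_char_0 \<Rightarrow> 'a::ab_group_add \<Rightarrow> 'a"
    and rh lh su pr :: "'a \<Rightarrow> 'a \<Rightarrow> 'a"
  assumes "vector_space s"
    and "pre_dual_pre_Poisson s rh lh su pr"
  shows "(dual_pre_Poisson s (\<lambda>x y. rh x y + lh x y) (\<lambda>x y. su x y + pr x y)
       \<and> dual_pre_Poisson_rep s (\<lambda>x y. rh x y + lh x y) (\<lambda>x y. su x y + pr x y)
           s (\<lambda>x y. rh x y) (\<lambda>x y. lh y x) (\<lambda>x y. su x y) (\<lambda>x y. pr y x))
       \<and> ((\<forall>x y. lh x y = rh y x \<and> pr x y = - su y x) \<longrightarrow>
         pre_Poisson s su rh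
       \<and> Poisson s (\<lambda>x y. rh x y + rh y x) (\<lambda>x y. su x y - su y x))"
    using partA1[OF assms] partA2[OF assms] partB[OF assms] by blast

end
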